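(* Let $n$ be a power of $2$ and consider the non-local hidden matching game on $n$. Its classical value $\omega_c$ (the maximum winning probability achievable by classical, i.e. local deterministic or shared-randomness, strategies) satisfies $$\omega_c \leq \frac{1}{2} + \frac{8\sqrt{n}\,\log n}{n-1}.$$
   Context: Let $n$ be a power of $2$, let $[n]$ be identified with $\{0,1\}^{\log n}$ (so that indices $i,j \in [n]$ are viewed as $\log n$-bit strings), and let $M_n$ be the set of all perfect matchings on $[n]$. In the non-local hidden matching game, Alice receives $x \in \{0,1\}^n$ and Bob receives $M \in M_n$, both uniformly distributed and independent. Alice outputs $a \in \{0,1\}^{\log n}$; Bob outputs an edge $(i,j) \in M$ and a string $b \in \{0,1\}^{\log n}$. They win iff $(a \oplus b)\cdot(i \oplus j) = x_i \oplus x_j$, where $\cdot$ is the inner product modulo $2$ and $\oplus$ is bitwise XOR. $\log$ denotes the base-$2$ logarithm. *)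

theory Defs
  imports Main "HOL-Library.FuncSet" Complex_Main
begin

text \<open>Indices in [n] (n = 2^k) are naturals below 2^k, viewed as k-bit strings
  via their binary expansion; bitwise XOR is the library operation xor on nat.\<close>

definition bits_ip :: "nat \<Rightarrow> nat \<Rightarrow> nat \<Rightarrow> bool" where
  "bits_ip k a c = odd (card {t. t < k \<and> bit a t \<and> bit c t})"

definition hm_inputs :: "nat \<Rightarrow> (nat \<Rightarrow> bool) set" where
  "hm_inputs n = {0..<n} \<rightarrow>\<^sub>E (UNIV :: bool set)"

definition perfect_matchings :: "nat \<Rightarrow> nat set set set" where
  "perfect_matchings n = {M. (\<forall>e\<in>M. \<exists>i j. i \<noteq> j \<and> e = {i, j})
       \<and> (\<forall>e\<in>M. \<forall>e'\<in>M. e \<noteq> e' \<longrightarrow> e \<inter> e' = {})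
       \<and> \<Union>M = {0..<n}}"

definition hm_wins :: "nat \<Rightarrow> (nat \<Rightarrow> bool) \<Rightarrow> nat \<Rightarrow> (nat \<times> nat) \<times> nat \<Rightarrow> bool" where
  "hm_wins k x a out = (case out of ((i, j), b) \<Rightarrow>
      (bits_ip k (xor a b) (xor i j) \<longleftrightarrow> (x i \<noteq> x j)))"

definition hm_valid_strategy ::
  "nat \<Rightarrow> ((nat \<Rightarrow> bool) \<Rightarrow> nat) \<Rightarrow> (nat set set \<Rightarrow> (nat \<times> nat) \<times> nat) \<Rightarrow> bool" where
  "hm_valid_strategy k A B =
     ((\<forall>x\<in>hm_inputs (2^k). A x < 2^k) \<and>
      (\<forall>M\<in>perfect_matchings (2^k).
          {fst (fst (B M)), snd (fst (B M))} \<in> M \<and> snd (B M) < 2^k))"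

definition hm_win_prob ::
  "nat \<Rightarrow> ((nat \<Rightarrow> bool) \<Rightarrow> nat) \<Rightarrow> (nat set set \<Rightarrow> (nat \<times> nat) \<times> nat) \<Rightarrow> real" where
  "hm_win_prob k A B =
     (\<Sum>x\<in>hm_inputs (2^k). \<Sum>M\<in>perfect_matchings (2^k).
         if hm_wins k x (A x) (B M) then 1 else 0)
     / (real (card (hm_inputs (2^k))) * real (card (perfect_matchings (2^k))))"

text \<open>Classical value: supremum over deterministic strategies (shared randomness
  is a convex combination of these and cannot exceed it).\<close>
definition hm_classical_value :: "nat \<Rightarrow> real" where
  "hm_classical_value k = Sup {hm_win_prob k A B | A B. hm_valid_strategy k A B}"

end

theory Submission
  imports Defs "HOL-Probability.Hoeffding"
begin


lemma cosh_le: "(exp x + exp (-x)) / 2 \<le> exp (x^2/2)" for x :: real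
proof -
  have main: "(exp x + exp (-x)) / 2 \<le> exp (x^2/2)" if "x \<ge> 0" for x :: real
  proof -
    have "-(2*x) * (1/2) + ln (1 + (1/2) * (exp (2*x) - 1)) \<le> (2*x)^2/8"
      using Hoeffdings_lemma_aux[of "2*x" "1/2"] that by simp
    hence "ln ((1 + exp (2*x))/2) \<le> x + x^2/2" by (simp add: power2_eq_square field_simps)
    hence "(1 + exp (2*x))/2 \<le> exp (x + x^2/2)"
      by (metis add_pos_pos divide_pos_pos exp_gt_zero exp_le_cancel_iff exp_ln zero_less_one zero_less_numeral)
    hence "exp (-x) * ((1 + exp (2*x))/2) \<le> exp (-x) * exp (x + x^2/2)" by simp
    moreover have "exp (-x) * ((1 + exp (2*x))/2) = (exp x + exp (-x)) / 2"
      by (simp add: field_simps flip: exp_add)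
    moreover have "exp (-x) * exp (x + x^2/2) = exp (x^2/2)" by (simp flip: exp_add)
    ultimately show ?thesis by simp
  qed
  show ?thesis
  proof (cases "x \<ge> 0")
    case True then show ?thesis using main by simp
  next
    case False then show ?thesis using main[of "-x"] by (simp add: add.commute)
  qed
qed

fun Ex :: "nat \<Rightarrow> ((nat \<Rightarrow> real) \<Rightarrow> real) \<Rightarrow> real" where
  "Ex 0 f = f (\<lambda>_. 1)"
| "Ex (Suc N) f = Ex N (\<lambda>y. (f (y(N:=1)) + f (y(N:=-1)))/2)"

lemma Ex_mono:
  assumes "\<And>y. (\<forall>i<N. y i = 1 \<or> y i = -1) \<Longrightarrow> f y \<le> g y"
  shows "Ex N f \<le> Ex N g"
  using assms
proof (induction N arbitrary: f g)
  case 0 then show ?case by simp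
next
  case (Suc N)
  show ?case unfolding Ex.simps
    apply (rule Suc.IH)
    apply (rule divide_right_mono)
     apply (rule add_mono; rule Suc.prems; auto simp: less_Suc_eq)
    by simp
qed

lemma Ex_cong:
  assumes "\<And>y. (\<forall>i<N. y i = 1 \<or> y i = -1) \<Longrightarrow> f y = g y"
  shows "Ex N f = Ex N g"
  using Ex_mono[of N f g] Ex_mono[of N g f] assms by force

lemma Ex_const: "Ex N (\<lambda>y. c) = c"
  by (induction N arbitrary: c) auto

lemma Ex_nonneg: "(\<And>y. f y \<ge> 0) \<Longrightarrow> Ex N f \<ge> 0"
  using Ex_mono[of N "\<lambda>y. 0" f] by (simp add: Ex_const)

lemma Ex_scale: "Ex N (\<lambda>y. c * f y) = c * Ex N f"
proof (induction N arbitrary: f)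
  case (Suc N)
  have "(\<lambda>y. (c*f(y(N:=1)) + c*f(y(N:=-1)))/2) = (\<lambda>y. c * ((f (y(N:=1)) + f (y(N:=-1)))/2))"
    by (simp add: fun_eq_iff algebra_simps)
  then show ?case using Suc.IH[of "\<lambda>y. (f (y(N:=1)) + f (y(N:=-1)))/2"] by (simp del: times_divide_eq_right)
qed simp

lemma Ex_add: "Ex N (\<lambda>y. f y + g y) = Ex N f + Ex N g"
  by (induction N arbitrary: f g) (auto simp: algebra_simps add_divide_distrib)

lemma Ex_sum: "finite A \<Longrightarrow> Ex N (\<lambda>y. \<Sum>a\<in>A. f a y) = (\<Sum>a\<in>A. Ex N (f a))"
  by (induction A rule: finite_induct) (auto simp: Ex_const Ex_add)

lemma two_CS: "(a*b + c*d)/2 \<le> sqrt ((a^2+c^2)/2) * sqrt ((b^2+d^2)/2)" for a b c d :: real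
proof -
  have "(a*b+c*d)^2 \<le> (a^2+c^2)*(b^2+d^2)"
  proof -
    have "(a^2+c^2)*(b^2+d^2) - (a*b+c*d)^2 = (a*d-b*c)^2" by algebra
    thus ?thesis using zero_le_power2[of "a*d-b*c"] by linarith
  qed
  hence "\<bar>a*b+c*d\<bar> \<le> sqrt ((a^2+c^2)*(b^2+d^2))"
    using real_le_rsqrt by (simp add: real_sqrt_abs[symmetric] del: real_sqrt_abs)
  hence "(a*b + c*d)/2 \<le> sqrt ((a^2+c^2)*(b^2+d^2)) / 2" by simp
  also have "\<dots> = sqrt ((a^2+c^2)/2) * sqrt ((b^2+d^2)/2)"
    by (simp add: real_sqrt_mult[symmetric] real_sqrt_divide)
  finally show ?thesis .
qed

lemma Ex_CS: "Ex N (\<lambda>y. f y * g y) \<le> sqrt (Ex N (\<lambda>y. (f y)^2)) * sqrt (Ex N (\<lambda>y. (g y)^2))"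
proof (induction N arbitrary: f g)
  case 0 then show ?case by (simp add: real_sqrt_mult[symmetric]) (metis abs_ge_self abs_mult)
next
  case (Suc N)
  let ?F = "\<lambda>y. sqrt (((f (y(N:=1)))^2 + (f (y(N:=-1)))^2)/2)"
  let ?G = "\<lambda>y. sqrt (((g (y(N:=1)))^2 + (g (y(N:=-1)))^2)/2)"
  have "Ex (Suc N) (\<lambda>y. f y * g y) \<le> Ex N (\<lambda>y. ?F y * ?G y)"
    unfolding Ex.simps by (rule Ex_mono) (rule two_CS)
  also have "\<dots> \<le> sqrt (Ex N (\<lambda>y. (?F y)^2)) * sqrt (Ex N (\<lambda>y. (?G y)^2))" by (rule Suc.IH)
  also have "\<dots> = sqrt (Ex (Suc N) (\<lambda>y. (f y)^2)) * sqrt (Ex (Suc N) (\<lambda>y. (g y)^2))"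
    by (simp add: add_nonneg_nonneg)
  finally show ?case .
qed

definition Lf :: "(nat \<Rightarrow> nat \<Rightarrow> real) \<Rightarrow> nat \<Rightarrow> (nat \<Rightarrow> real) \<Rightarrow> real" where
  "Lf W j y = (\<Sum>i<j. W j i * y i)"
definition Qf :: "(nat \<Rightarrow> nat \<Rightarrow> real) \<Rightarrow> nat \<Rightarrow> (nat \<Rightarrow> real) \<Rightarrow> real" where
  "Qf W N y = (\<Sum>j<N. y j * Lf W j y)"
definition Sf :: "(nat \<Rightarrow> nat \<Rightarrow> real) \<Rightarrow> nat \<Rightarrow> (nat \<Rightarrow> real) \<Rightarrow> real" where
  "Sf W N y = (\<Sum>j<N. (Lf W j y)^2)"
definition Fr :: "(nat \<Rightarrow> nat \<Rightarrow> real) \<Rightarrow> nat \<Rightarrow> real" where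
  "Fr W N = (\<Sum>j<N. \<Sum>i<j. (W j i)^2)"

lemma Lf_upd: "j \<le> N \<Longrightarrow> Lf W j (y(N:=v)) = Lf W j y"
  unfolding Lf_def by (intro sum.cong) auto

lemma Qf_upd: "Qf W N (y(N:=v)) = Qf W N y"
  unfolding Qf_def by (intro sum.cong) (auto simp: Lf_upd)

lemma Sf_upd: "Sf W N (y(N:=v)) = Sf W N y"
  unfolding Sf_def by (intro sum.cong) (auto simp: Lf_upd)

lemma Qf_Suc: "Qf W (Suc N) y = Qf W N y + y N * Lf W N y"
  unfolding Qf_def by simp

lemma Sf_Suc: "Sf W (Suc N) y = Sf W N y + (Lf W N y)^2"
  unfolding Sf_def by simp

lemma martingale: "Ex N (\<lambda>y. exp (\<mu> * Qf W N y - \<mu>^2/2 * Sf W N y)) \<le> 1"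
proof (induction N)
  case 0 then show ?case by (simp add: Qf_def Sf_def)
next
  case (Suc N)
  have "Ex (Suc N) (\<lambda>y. exp (\<mu> * Qf W (Suc N) y - \<mu>^2/2 * Sf W (Suc N) y))
     \<le> Ex N (\<lambda>y. exp (\<mu> * Qf W N y - \<mu>^2/2 * Sf W N y))"
    unfolding Ex.simps
  proof (rule Ex_mono)
    fix y :: "nat \<Rightarrow> real"
    define E0 where "E0 = exp (\<mu> * Qf W N y - \<mu>^2/2 * Sf W N y)"
    define Lv where "Lv = Lf W N y"
    have e: "exp (\<mu> * Qf W (Suc N) (y(N:=vv)) - \<mu>^2/2 * Sf W (Suc N) (y(N:=vv)))
           = E0 * exp (\<mu> * vv* Lv - \<mu>^2/2 * Lv^2)" for vv
      unfolding Qf_Suc Sf_Suc Qf_upd Sf_upd Lf_upd[OF order_refl] E0_def Lv_def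
      by (simp add: algebra_simps flip: exp_add)
    have "(exp (\<mu> * 1* Lv - \<mu>^2/2 * Lv^2) + exp (\<mu> * (-1)* Lv - \<mu>^2/2 * Lv^2))/2
        = ((exp (\<mu> * Lv) + exp (-(\<mu> * Lv)))/2) * exp (-((\<mu> * Lv)^2)/2)"
      by (simp add: field_simps power_mult_distrib flip: exp_add exp_diff)
    also have "\<dots> \<le> exp ((\<mu> * Lv)^2/2) * exp (-((\<mu> * Lv)^2)/2)"
      by (rule mult_right_mono[OF cosh_le]) simp
    also have "\<dots> = 1" by (simp flip: exp_add)
    finally have c: "(exp (\<mu> * 1* Lv - \<mu>^2/2 * Lv^2) + exp (\<mu> * (-1)* Lv - \<mu>^2/2 * Lv^2))/2 \<le> 1" .
    have "E0 > 0" unfolding E0_def by simp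
    show "(exp (\<mu> * Qf W (Suc N) (y(N:=1)) - \<mu>^2/2 * Sf W (Suc N) (y(N:=1))) +
           exp (\<mu> * Qf W (Suc N) (y(N:=-1)) - \<mu>^2/2 * Sf W (Suc N) (y(N:=-1))))/2
        \<le> exp (\<mu> * Qf W N y - \<mu>^2/2 * Sf W N y)"
      unfolding e E0_def[symmetric]
      using mult_left_mono[OF c, of E0] \<open>E0 > 0\<close> by (simp add: algebra_simps add_divide_distrib)
  qed
  then show ?case using Suc.IH by linarith
qed

lemma sq_sum_tri: "(\<Sum>i<j. c i)^2 = (\<Sum>i<j. (c i)^2) + 2*(\<Sum>i<j. \<Sum>i'<i. c i * c i')"
  for c :: "nat \<Rightarrow> real"
  by (induction j) (auto simp: power2_eq_square algebra_simps sum_distrib_left sum_distrib_right)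

lemma swap_tri: "(\<Sum>j<N. \<Sum>i<j. G j i) = (\<Sum>i<N. \<Sum>j\<in>{i<..<N}. G j i)"
  for G :: "nat \<Rightarrow> nat \<Rightarrow> real"
proof (induction N)
  case 0 then show ?case by simp
next
  case (Suc N)
  have e: "{N<..<Suc N} = {}" by auto
  have "(\<Sum>i<Suc N. \<Sum>j\<in>{i<..<Suc N}. G j i) = (\<Sum>i<N. \<Sum>j\<in>{i<..<Suc N}. G j i)"
    by (simp add: e)
  also have "\<dots> = (\<Sum>i<N. (\<Sum>j\<in>{i<..<N}. G j i) + G N i)"
  proof (rule sum.cong)
    fix i assume "i \<in> {..<N}"
    hence "{i<..<Suc N} = insert N {i<..<N}" by auto
    thus "(\<Sum>j\<in>{i<..<Suc N}. G j i) = (\<Sum>j\<in>{i<..<N}. G j i) + G N i" by simp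
  qed simp
  finally show ?case using Suc.IH by (simp add: sum.distrib)
qed

definition W2 :: "(nat \<Rightarrow> nat \<Rightarrow> real) \<Rightarrow> nat \<Rightarrow> nat \<Rightarrow> nat \<Rightarrow> real" where
  "W2 W N a b = 2 * (\<Sum>j\<in>{a<..<N}. W j a * W j b)"

lemma S_decomp:
  assumes cube: "\<forall>i<N. y i = 1 \<or> y i = -1"
  shows "Sf W N y = Fr W N + Qf (W2 W N) N y"
proof -
  have sq: "(y i)^2 = 1" if "i < N" for i using cube that by auto
  have "Sf W N y = (\<Sum>j<N. (\<Sum>i<j. (W j i * y i)^2) + 2*(\<Sum>i<j. \<Sum>i'<i. (W j i * y i) * (W j i' * y i')))"
    unfolding Sf_def Lf_def by (simp add: sq_sum_tri)
  also have "\<dots> = Fr W N + 2 * (\<Sum>j<N. \<Sum>i<j. \<Sum>i'<i. (W j i * y i) * (W j i' * y i'))"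
  proof -
    have "(\<Sum>j<N. \<Sum>i<j. (W j i * y i)^2) = Fr W N"
      unfolding Fr_def
      by (intro sum.cong refl) (auto simp: power_mult_distrib sq)
    thus ?thesis by (simp add: sum.distrib sum_distrib_left)
  qed
  also have "(\<Sum>j<N. \<Sum>i<j. \<Sum>i'<i. (W j i * y i) * (W j i' * y i'))
      = (\<Sum>i<N. \<Sum>j\<in>{i<..<N}. \<Sum>i'<i. (W j i * y i) * (W j i' * y i'))"
    by (rule swap_tri)
  also have "2 * \<dots> = Qf (W2 W N) N y"
  proof -
    have "2 * (\<Sum>j\<in>{a<..<N}. \<Sum>i'<a. W j a * y a * (W j i' * y i')) =
      (\<Sum>b<a. y a * (2 * (\<Sum>j\<in>{a<..<N}. W j a * W j b) * y b))" for a
      by (subst sum.swap) (simp add: sum_distrib_left sum_distrib_right mult_ac)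
    thus ?thesis unfolding Qf_def Lf_def W2_def sum_distrib_left by simp
  qed
  finally show ?thesis .
qed

lemma Fr_nonneg: "Fr W N \<ge> 0"
  unfolding Fr_def by (intro sum_nonneg) auto

lemma Fr_W2: "Fr (W2 W N) N \<le> 2 * (Fr W N)^2"
proof -
  define c where "c a = (\<Sum>j\<in>{a<..<N}. (W j a)^2)" for a
  have c0: "c a \<ge> 0" for a unfolding c_def by (intro sum_nonneg) auto
  have F: "Fr W N = (\<Sum>a<N. c a)" unfolding Fr_def c_def by (rule swap_tri)
  have "Fr (W2 W N) N = (\<Sum>a<N. \<Sum>b<a. 4 * (\<Sum>j\<in>{a<..<N}. W j a * W j b)^2)"
    unfolding Fr_def W2_def by (simp add: power_mult_distrib)
  also have "\<dots> \<le> (\<Sum>a<N. \<Sum>b<a. 4 * (c a * c b))"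
  proof (intro sum_mono mult_left_mono)
    fix a b :: nat assume b: "b \<in> {..<a}"
    have "(\<Sum>j\<in>{a<..<N}. W j a * W j b)^2 \<le> c a * (\<Sum>j\<in>{a<..<N}. (W j b)^2)"
      unfolding c_def by (rule Cauchy_Schwarz_ineq_sum)
    also have "(\<Sum>j\<in>{a<..<N}. (W j b)^2) \<le> c b"
      unfolding c_def using b by (intro sum_mono2) auto
    hence "c a * (\<Sum>j\<in>{a<..<N}. (W j b)^2) \<le> c a * c b" by (intro mult_left_mono c0)
    finally show "(\<Sum>j\<in>{a<..<N}. W j a * W j b)^2 \<le> c a * c b" .
  qed simp
  also have "\<dots> = 2 * (2 * (\<Sum>a<N. \<Sum>b<a. c a * c b))"
    by (simp add: sum_distrib_left)
  also have "\<dots> \<le> 2 * (Fr W N)^2"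
    unfolding F sq_sum_tri using sum_nonneg[of "{..<N}" "\<lambda>i. (c i)^2"] by auto
  finally show ?thesis .
qed

lemma W_le: "j < N \<Longrightarrow> i < j \<Longrightarrow> \<bar>W j i\<bar> \<le> sqrt (Fr W N)"
proof -
  assume a: "j < N" "i < j"
  have "(W j i)^2 \<le> (\<Sum>i<j. (W j i)^2)" using a by (intro member_le_sum) auto
  also have "\<dots> \<le> Fr W N" unfolding Fr_def using a
    by (intro member_le_sum[of j "{..<N}" "\<lambda>j. \<Sum>i<j. (W j i)^2"]) (auto intro: sum_nonneg)
  finally show ?thesis using real_sqrt_le_mono by fastforce
qed

lemma Qf_bound:
  assumes cube: "\<forall>i<N. y i = 1 \<or> y i = -1"
  shows "\<bar>Qf W N y\<bar> \<le> real N * real N * sqrt (Fr W N)"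
proof -
  have "\<bar>Qf W N y\<bar> \<le> (\<Sum>j<N. \<bar>y j * Lf W j y\<bar>)" unfolding Qf_def by (rule sum_abs)
  also have "\<dots> \<le> (\<Sum>j<N. real N * sqrt (Fr W N))"
  proof (intro sum_mono)
    fix j assume j: "j \<in> {..<N}"
    have "\<bar>y j\<bar> = 1" using cube j by auto
    have "\<bar>Lf W j y\<bar> \<le> (\<Sum>i<j. \<bar>W j i * y i\<bar>)" unfolding Lf_def by (rule sum_abs)
    also have "\<dots> \<le> (\<Sum>i<j. sqrt (Fr W N))"
    proof (intro sum_mono)
      fix i assume i: "i \<in> {..<j}"
      have "i < N" using i j by auto
      hence "\<bar>y i\<bar> = 1" using cube by auto
      thus "\<bar>W j i * y i\<bar> \<le> sqrt (Fr W N)" using W_le[of j N i W] i j by (simp add: abs_mult)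
    qed
    also have "\<dots> = real j * sqrt (Fr W N)" by simp
    also have "\<dots> \<le> real N * sqrt (Fr W N)" using j Fr_nonneg[of W N] by (intro mult_right_mono) auto
    finally show "\<bar>y j * Lf W j y\<bar> \<le> real N * sqrt (Fr W N)" using \<open>\<bar>y j\<bar> = 1\<close> by (simp add: abs_mult)
  qed
  also have "\<dots> = real N * real N * sqrt (Fr W N)" by simp
  finally show ?thesis .
qed

lemma sqrt_exp: "sqrt (exp x) = exp (x/2)"
proof -
  have "exp x = (exp (x/2))^2" by (simp add: power2_eq_square flip: exp_add)
  thus ?thesis by simp
qed

lemma mgf_iter:
  "\<forall>W t. t^2 * Fr W N \<le> 1/16 \<longrightarrow>
     Ex N (\<lambda>y. exp (t * Qf W N y)) \<le> exp (2*t^2*Fr W N + real N * real N * (\<bar>t\<bar> * sqrt (Fr W N)) * (3/4)^r)"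
proof (induction r)
  case 0
  show ?case
  proof (intro allI impI)
    fix W t
    have "Ex N (\<lambda>y. exp (t * Qf W N y)) \<le> Ex N (\<lambda>y. exp (2*t^2*Fr W N + real N * real N * (\<bar>t\<bar> * sqrt (Fr W N)) * (3/4)^0))"
    proof (rule Ex_mono)
      fix y :: "nat \<Rightarrow> real" assume c: "\<forall>i<N. y i = 1 \<or> y i = -1"
      have "t * Qf W N y \<le> \<bar>t\<bar> * \<bar>Qf W N y\<bar>" by (metis abs_ge_self abs_mult)
      also have "\<dots> \<le> \<bar>t\<bar> * (real N * real N * sqrt (Fr W N))"
        by (intro mult_left_mono Qf_bound c) simp
      also have "\<dots> \<le> 2*t^2*Fr W N + real N * real N * (\<bar>t\<bar> * sqrt (Fr W N)) * (3/4)^0"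
        using Fr_nonneg[of W N] by simp
      finally show "exp (t * Qf W N y) \<le> exp (2*t^2*Fr W N + real N * real N * (\<bar>t\<bar> * sqrt (Fr W N)) * (3/4)^0)"
        by simp
    qed
    thus "Ex N (\<lambda>y. exp (t * Qf W N y)) \<le> exp (2*t^2*Fr W N + real N * real N * (\<bar>t\<bar> * sqrt (Fr W N)) * (3/4)^0)"
      by (simp add: Ex_const)
  qed
next
  case (Suc r)
  show ?case
  proof (intro allI impI)
    fix W t
    assume h: "t^2 * Fr W N \<le> 1/16"
    define F where "F = Fr W N"
    define F2 where "F2 = Fr (W2 W N) N"
    define K where "K = real N * real N"
    define \<rho> where "\<rho> = (3/4::real)^r"
    define u where "u = \<bar>t\<bar> * sqrt F"
    have F0: "F \<ge> 0" unfolding F_def by (rule Fr_nonneg)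
    have F20: "F2 \<ge> 0" unfolding F2_def by (rule Fr_nonneg)
    have K0: "K \<ge> 0" unfolding K_def by simp
    have r0: "\<rho> \<ge> 0" unfolding \<rho>_def by simp
    have u0: "u \<ge> 0" unfolding u_def using F0 by simp
    have uu: "u^2 = t^2 * F" unfolding u_def using F0 by (simp add: power_mult_distrib)
    have hu: "u^2 \<le> 1/16" using h uu F_def by simp
    have u4: "u \<le> 1/4"
    proof (rule ccontr)
      assume "\<not> u \<le> 1/4"
      hence "u*u > (1/4)*(1/4)" using mult_strict_mono[of "1/4" u "1/4" u] by auto
      thus False using hu by (simp add: power2_eq_square)
    qed
    have F2le: "F2 \<le> 2 * F^2" unfolding F2_def F_def by (rule Fr_W2)
    have sF2: "sqrt F2 \<le> 2 * F"
    proof -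
      have "F2 \<le> (2*F)^2" using F2le F0 mult_nonneg_nonneg[OF F0 F0] unfolding power2_eq_square by linarith
      hence "sqrt F2 \<le> sqrt ((2*F)^2)" by (rule real_sqrt_le_mono)
      moreover have "sqrt ((2*F)^2) = 2*F" using F0 by (simp only: real_sqrt_abs)
      ultimately show ?thesis by metis
    qed
    have c1: "Ex N (\<lambda>y. exp (t * Qf W N y)) \<le> sqrt (Ex N (\<lambda>y. (exp (t * Qf W N y - t^2 * Sf W N y))^2)) * sqrt (Ex N (\<lambda>y. (exp (t^2 * Sf W N y))^2))"
    proof -
      have "Ex N (\<lambda>y. exp (t * Qf W N y)) = Ex N (\<lambda>y. exp (t * Qf W N y - t^2 * Sf W N y) * exp (t^2 * Sf W N y))"
        by (simp flip: exp_add)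
      also have "\<dots> \<le> sqrt (Ex N (\<lambda>y. (exp (t * Qf W N y - t^2 * Sf W N y))^2)) * sqrt (Ex N (\<lambda>y. (exp (t^2 * Sf W N y))^2))"
        by (rule Ex_CS)
      finally show ?thesis .
    qed
    have c2: "Ex N (\<lambda>y. (exp (t * Qf W N y - t^2 * Sf W N y))^2) \<le> 1"
    proof -
      have "Ex N (\<lambda>y. (exp (t * Qf W N y - t^2 * Sf W N y))^2) = Ex N (\<lambda>y. exp ((2*t) * Qf W N y - (2*t)^2/2 * Sf W N y))"
        by (intro Ex_cong) (simp add: power2_eq_square algebra_simps flip: exp_add)
      also have "\<dots> \<le> 1" by (rule martingale)
      finally show ?thesis .
    qed
    have c3: "Ex N (\<lambda>y. (exp (t^2 * Sf W N y))^2) = exp (2*t^2*F) * Ex N (\<lambda>y. exp ((2*t^2) * Qf (W2 W N) N y))"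
    proof -
      have "Ex N (\<lambda>y. (exp (t^2 * Sf W N y))^2) = Ex N (\<lambda>y. exp (2*t^2*F) * exp ((2*t^2) * Qf (W2 W N) N y))"
      proof (rule Ex_cong)
        fix y :: "nat \<Rightarrow> real" assume c: "\<forall>i<N. y i = 1 \<or> y i = -1"
        show "(exp (t^2 * Sf W N y))^2 = exp (2*t^2*F) * exp ((2*t^2) * Qf (W2 W N) N y)"
          unfolding S_decomp[OF c] F_def by (simp add: power2_eq_square algebra_simps flip: exp_add)
      qed
      thus ?thesis by (simp add: Ex_scale)
    qed
    have c4: "Ex N (\<lambda>y. exp ((2*t^2) * Qf (W2 W N) N y)) \<le> exp (2*(2*t^2)^2*F2 + K * (\<bar>2*t^2\<bar> * sqrt F2) * \<rho>)"
    proof -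
      have "(2*t^2)^2 * F2 \<le> (2*t^2)^2 * (2*F^2)" by (intro mult_left_mono F2le) simp
      also have "\<dots> = 8 * (t^2*F)^2" by (simp add: power2_eq_square)
      also have "\<dots> \<le> 8 * ((1/16)*(1/16))"
        unfolding uu[symmetric] using mult_mono[OF hu hu] by (simp add: power2_eq_square)
      finally have "(2*t^2)^2 * F2 \<le> 1/16" by simp
      thus ?thesis using Suc.IH unfolding F2_def K_def \<rho>_def by blast
    qed
    have "Ex N (\<lambda>y. (exp (t^2 * Sf W N y))^2) \<le> exp (2*t^2*F) * exp (2*(2*t^2)^2*F2 + K * (\<bar>2*t^2\<bar> * sqrt F2) * \<rho>)"
      unfolding c3 using c4 by (intro mult_left_mono) auto
    hence s1: "sqrt (Ex N (\<lambda>y. (exp (t^2 * Sf W N y))^2)) \<le> sqrt (exp (2*t^2*F) * exp (2*(2*t^2)^2*F2 + K * (\<bar>2*t^2\<bar> * sqrt F2) * \<rho>))"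
      by (rule real_sqrt_le_mono)
    have s2: "sqrt (Ex N (\<lambda>y. (exp (t * Qf W N y - t^2 * Sf W N y))^2)) \<le> 1"
      using c2 by simp
    have A: "Ex N (\<lambda>y. exp (t * Qf W N y)) \<le> sqrt 1 * sqrt (exp (2*t^2*F) * exp (2*(2*t^2)^2*F2 + K * (\<bar>2*t^2\<bar> * sqrt F2) * \<rho>))"
      using order_trans[OF c1 mult_mono[OF s2 s1]] Ex_nonneg[of "\<lambda>y. (exp (t^2 * Sf W N y))^2" N] by simp
    have B: "2*(2*t^2)^2*F2 + K * (\<bar>2*t^2\<bar> * sqrt F2) * \<rho> \<le> 2 * t^2 * F + K * u * \<rho> * (3/2)"
    proof -
      have "2*(2*t^2)^2*F2 \<le> 2*(2*t^2)^2*(2*F^2)" by (intro mult_left_mono F2le) simp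
      also have "\<dots> = 16 * u^2 * u^2" unfolding uu by (simp add: power2_eq_square)
      also have "\<dots> \<le> 16 * u^2 * (1/16)" by (intro mult_left_mono hu) simp
      finally have b1: "2*(2*t^2)^2*F2 \<le> u^2" by simp
      have "K * (\<bar>2*t^2\<bar> * sqrt F2) * \<rho> \<le> K * (2*t^2 * (2*F)) * \<rho>"
      proof -
        have q: "\<bar>2*t^2\<bar> * sqrt F2 \<le> 2*t^2 * (2*F)" using mult_left_mono[OF sF2, of "2*t^2"] by simp
        show ?thesis by (rule mult_right_mono[OF mult_left_mono[OF q K0] r0])
      qed
      also have "\<dots> = K * \<rho> * (4 * (t^2 * F))" by (simp add: algebra_simps)
      also have "\<dots> = K * \<rho> * (4 * u * u)" unfolding uu[symmetric] by (simp add: power2_eq_square)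
      also have "\<dots> \<le> K * \<rho> * (4 * u * (1/4))"
        using K0 r0 u0 u4 by (intro mult_left_mono) auto
      finally have b2: "K * (\<bar>2*t^2\<bar> * sqrt F2) * \<rho> \<le> K * u * \<rho>" by (simp add: mult_ac)
      have "u^2 \<le> 2*t^2*F" using uu F0 by simp
      moreover have "K * u * \<rho> \<le> K * u * \<rho> * (3/2)" using K0 u0 r0 by simp
      ultimately show ?thesis using b1 b2 by linarith
    qed
    have "sqrt 1 * sqrt (exp (2*t^2*F) * exp (2*(2*t^2)^2*F2 + K * (\<bar>2*t^2\<bar> * sqrt F2) * \<rho>))
        = exp ((2*t^2*F + (2*(2*t^2)^2*F2 + K * (\<bar>2*t^2\<bar> * sqrt F2) * \<rho>))/2)"
      by (simp add: sqrt_exp flip: exp_add)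
    also have "\<dots> \<le> exp (2*t^2*F + K * u * (3/4)^(Suc r))"
    proof -
      have e: "K * u * (3/4)^(Suc r) = (3/4) * (K * u * \<rho>)" by (simp add: \<rho>_def mult_ac)
      have e2: "K * u * \<rho> * (3/2) = (3/2) * (K * u * \<rho>)" by simp
      have aux: "b \<le> a + (3/2)*x \<Longrightarrow> (a + b)/2 \<le> a + 3/4*x" for a b x :: real by (simp add: field_simps)
      show ?thesis unfolding exp_le_cancel_iff e using B unfolding e2 by (rule aux)
    qed
    finally show "Ex N (\<lambda>y. exp (t * Qf W N y)) \<le> exp (2*t^2*Fr W N + real N * real N * (\<bar>t\<bar> * sqrt (Fr W N)) * (3/4)^(Suc r))"
      using A unfolding F_def K_def u_def by (simp add: mult_ac)
  qed
qed

lemma mgf: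
  assumes "t^2 * Fr W N \<le> 1/16"
  shows "Ex N (\<lambda>y. exp (t * Qf W N y)) \<le> exp (2*t^2*Fr W N)"
proof -
  define c where "c = real N * real N * (\<bar>t\<bar> * sqrt (Fr W N))"
  have le: "Ex N (\<lambda>y. exp (t * Qf W N y)) \<le> exp (2*t^2*Fr W N + c * (3/4)^r)" for r
    using mgf_iter[of N r] assms unfolding c_def by blast
  have "(\<lambda>r. exp (2*t^2*Fr W N + c * (3/4)^r)) \<longlonglongrightarrow> exp (2*t^2*Fr W N + c * 0)"
    by (intro tendsto_intros LIMSEQ_realpow_zero) auto
  hence "Ex N (\<lambda>y. exp (t * Qf W N y)) \<le> exp (2*t^2*Fr W N + c * 0)"
    by (rule LIMSEQ_le_const) (use le in auto)
  thus ?thesis by simp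
qed

lemma sum_PiE_Ex:
  assumes "\<And>x x'. (\<forall>i<N. x i = x' i) \<Longrightarrow> G x = G x'"
  shows "(\<Sum>x\<in>{0..<N} \<rightarrow>\<^sub>E (UNIV::bool set). G x) = 2^N * Ex N (\<lambda>y. G (\<lambda>i. y i = -1))"
  using assms
proof (induction N arbitrary: G)
  case 0
  have "G (\<lambda>_. undefined) = G (\<lambda>i. (1::real) = -1)" by (rule 0) simp
  then show ?case by simp
next
  case (Suc N)
  define G' where "G' g = G (g(N:=True)) + G (g(N:=False))" for g
  have dep: "G' x = G' x'" if "\<forall>i<N. x i = x' i" for x x'
  proof -
    have "G (x(N:=b)) = G (x'(N:=b))" for b by (rule Suc.prems) (use that in \<open>auto simp: less_Suc_eq\<close>)
    thus ?thesis unfolding G'_def by simp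
  qed
  have "{0..<Suc N} = insert N {0..<N}" by auto
  hence "(\<Sum>x\<in>{0..<Suc N} \<rightarrow>\<^sub>E (UNIV::bool set). G x)
      = (\<Sum>x\<in>(\<lambda>(y, g). g(N := y)) ` (UNIV \<times> ({0..<N} \<rightarrow>\<^sub>E (UNIV::bool set))). G x)"
    by (simp add: PiE_insert_eq)
  also have "\<dots> = (\<Sum>(y,g)\<in>UNIV \<times> ({0..<N} \<rightarrow>\<^sub>E (UNIV::bool set)). G (g(N := y)))"
  proof -
    have "inj_on (\<lambda>(y, g). g(N := y)) (UNIV \<times> ({0..<N} \<rightarrow>\<^sub>E (UNIV::bool set)))"
      using inj_combinator[of N "{0..<N}" "\<lambda>_. UNIV::bool set"] by simp
    thus ?thesis by (simp add: sum.reindex case_prod_unfold)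
  qed
  also have "\<dots> = (\<Sum>y\<in>UNIV. \<Sum>g\<in>{0..<N} \<rightarrow>\<^sub>E (UNIV::bool set). G (g(N := y)))"
    by (simp add: sum.cartesian_product)
  also have "\<dots> = (\<Sum>g\<in>{0..<N} \<rightarrow>\<^sub>E (UNIV::bool set). G' g)"
    unfolding G'_def by (simp add: UNIV_bool sum.distrib add.commute)
  also have "\<dots> = 2^N * Ex N (\<lambda>y. G' (\<lambda>i. y i = -1))"
    by (rule Suc.IH) (rule dep)
  also have "\<dots> = 2^Suc N * Ex (Suc N) (\<lambda>y. G (\<lambda>i. y i = -1))"
  proof -
    have "(\<lambda>i. (y(N:=1)) i = -1) = (\<lambda>i. y i = -1)(N:=False)" for y :: "nat \<Rightarrow> real"
      by (auto simp: fun_eq_iff)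
    moreover have "(\<lambda>i. (y(N:=-1)) i = -1) = (\<lambda>i. y i = -1)(N:=True)" for y :: "nat \<Rightarrow> real"
      by (auto simp: fun_eq_iff)
    ultimately have "Ex (Suc N) (\<lambda>y. G (\<lambda>i. y i = -1)) = Ex N (\<lambda>y. (1/2) * G' (\<lambda>i. y i = -1))"
      unfolding G'_def by (simp add: add.commute)
    thus ?thesis using Ex_scale[of N "1/2" "\<lambda>y. G' (\<lambda>i. y i = -1)"] by simp
  qed
  finally show ?case .
qed



lemma pm_finite: "finite (perfect_matchings n)"
proof -
  have "perfect_matchings n \<subseteq> Pow (Pow {0..<n})" unfolding perfect_matchings_def by auto
  thus ?thesis by (rule finite_subset) auto
qed

lemma pm_edge: "M \<in> perfect_matchings n \<Longrightarrow> e \<in> M \<Longrightarrow> \<exists>i j. i \<noteq> j \<and> e = {i, j}"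
  unfolding perfect_matchings_def by auto

lemma pm_disj: "M \<in> perfect_matchings n \<Longrightarrow> e \<in> M \<Longrightarrow> e' \<in> M \<Longrightarrow> e \<noteq> e' \<Longrightarrow> e \<inter> e' = {}"
  unfolding perfect_matchings_def by auto

lemma pm_Union: "M \<in> perfect_matchings n \<Longrightarrow> \<Union>M = {0..<n}"
  unfolding perfect_matchings_def by auto

lemma pm_partner:
  assumes M: "M \<in> perfect_matchings n" and i: "i < n"
  shows "\<exists>!j. j \<noteq> i \<and> {i, j} \<in> M"
proof -
  have "i \<in> \<Union>M" using pm_Union[OF M] i by auto
  then obtain e where e: "e \<in> M" "i \<in> e" by auto
  obtain p q where pq: "p \<noteq> q" "e = {p, q}" using pm_edge[OF M e(1)] by auto
  have "i = p \<or> i = q" using pq e(2) by auto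
  then obtain j where j: "j \<noteq> i" "e = {i, j}"
  proof
    assume "i = p" thus ?thesis using that[of q] pq by auto
  next
    assume "i = q" thus ?thesis using that[of p] pq by auto
  qed
  show ?thesis
  proof (rule ex1I[of _ j])
    show "j \<noteq> i \<and> {i, j} \<in> M" using j e by auto
  next
    fix j' assume j': "j' \<noteq> i \<and> {i, j'} \<in> M"
    show "j' = j"
    proof (rule ccontr)
      assume "j' \<noteq> j"
      hence "{i, j'} \<noteq> {i, j}" using j' j by (auto simp: doubleton_eq_iff)
      hence "{i, j'} \<inter> {i, j} = {}" by (intro pm_disj[OF M]) (use j' j e in auto)
      thus False by auto
    qed
  qed
qed

lemma sum_if_card: "finite A \<Longrightarrow> (\<Sum>x\<in>A. if P x then 1 else 0) = card {x\<in>A. P x}"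
proof (induction A rule: finite_induct)
  case (insert a A)
  have "{x \<in> insert a A. P x} = (if P a then insert a {x\<in>A. P x} else {x\<in>A. P x})" by auto
  thus ?case using insert by auto
qed simp

lemma pm_sum_count:
  assumes i: "i < n"
  shows "(\<Sum>j\<in>{0..<n}-{i}. card {M\<in>perfect_matchings n. {i,j}\<in>M}) = card (perfect_matchings n)"
proof -
  have "(\<Sum>j\<in>{0..<n}-{i}. card {M\<in>perfect_matchings n. {i,j}\<in>M})
      = (\<Sum>j\<in>{0..<n}-{i}. \<Sum>M\<in>perfect_matchings n. if {i,j}\<in>M then 1 else 0)"
    by (intro sum.cong refl) (simp only: sum_if_card[OF pm_finite])
  also have "\<dots> = (\<Sum>M\<in>perfect_matchings n. \<Sum>j\<in>{0..<n}-{i}. if {i,j}\<in>M then 1 else 0)"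
    by (rule sum.swap)
  also have "\<dots> = (\<Sum>M\<in>perfect_matchings n. 1)"
  proof (intro sum.cong refl)
    fix M assume M: "M \<in> perfect_matchings n"
    obtain j where j: "j \<noteq> i" "{i,j} \<in> M" and u: "\<And>j'. j' \<noteq> i \<and> {i,j'} \<in> M \<Longrightarrow> j' = j"
      using pm_partner[OF M i] by metis
    have "j < n" using pm_Union[OF M] j by auto
    have "{j'\<in>{0..<n}-{i}. {i,j'}\<in>M} = {j}"
    proof
      show "{j'\<in>{0..<n}-{i}. {i,j'}\<in>M} \<subseteq> {j}" using u by blast
      show "{j} \<subseteq> {j'\<in>{0..<n}-{i}. {i,j'}\<in>M}" using j \<open>j < n\<close> by simp
    qed
    thus "(\<Sum>j\<in>{0..<n}-{i}. if {i,j}\<in>M then 1 else 0) = (1::nat)"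
      by (simp only: sum_if_card[OF finite_Diff[OF finite_atLeastLessThan]]) simp
  qed
  finally show ?thesis by simp
qed

definition sw :: "nat \<Rightarrow> nat \<Rightarrow> nat \<Rightarrow> nat" where
  "sw a b x = (if x = a then b else if x = b then a else x)"

lemma sw_sw [simp]: "sw a b (sw a b x) = x" unfolding sw_def by auto

lemma sw_inj: "inj (sw a b)" by (metis injI sw_sw)

definition Phi :: "nat \<Rightarrow> nat \<Rightarrow> nat set set \<Rightarrow> nat set set" where
  "Phi a b M = (\<lambda>e. sw a b ` e) ` M"

lemma Phi_Phi [simp]: "Phi a b (Phi a b M) = M"
  unfolding Phi_def by (simp add: image_image)

lemma Phi_pm:
  assumes M: "M \<in> perfect_matchings n" and a: "a < n" and b: "b < n"
  shows "Phi a b M \<in> perfect_matchings n"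
proof -
  have inj: "inj (sw a b)" by (rule sw_inj)
  have 1: "\<forall>e\<in>Phi a b M. \<exists>i j. i \<noteq> j \<and> e = {i, j}"
  proof
    fix e assume "e \<in> Phi a b M"
    then obtain e0 where e0: "e0 \<in> M" "e = sw a b ` e0" unfolding Phi_def by auto
    obtain p q where pq: "p \<noteq> q" "e0 = {p,q}" using pm_edge[OF M e0(1)] by auto
    have "e = {sw a b p, sw a b q}" using e0(2) pq(2) by simp
    moreover have "sw a b p \<noteq> sw a b q" using pq(1) by (metis sw_sw)
    ultimately show "\<exists>i j. i \<noteq> j \<and> e = {i, j}" by blast
  qed
  have 2: "\<forall>e\<in>Phi a b M. \<forall>e'\<in>Phi a b M. e \<noteq> e' \<longrightarrow> e \<inter> e' = {}"
  proof (intro ballI impI)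
    fix e e' assume "e \<in> Phi a b M" "e' \<in> Phi a b M" "e \<noteq> e'"
    then obtain e0 e0' where ee: "e0 \<in> M" "e0' \<in> M" "e = sw a b ` e0" "e' = sw a b ` e0'"
      unfolding Phi_def by auto
    have "e0 \<noteq> e0'" using ee \<open>e \<noteq> e'\<close> by metis
    hence "e0 \<inter> e0' = {}" using pm_disj[OF M ee(1) ee(2)] by simp
    moreover have "e \<inter> e' = sw a b ` (e0 \<inter> e0')" unfolding ee(3,4) by (rule image_Int[OF inj, symmetric])
    ultimately show "e \<inter> e' = {}" by simp
  qed
  have 3: "\<Union>(Phi a b M) = {0..<n}"
  proof -
    have "\<Union>(Phi a b M) = sw a b ` \<Union>M" unfolding Phi_def by auto
    also have "\<dots> = sw a b ` {0..<n}" using pm_Union[OF M] by simp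
    also have "\<dots> = {0..<n}"
    proof
      show "sw a b ` {0..<n} \<subseteq> {0..<n}" using a b by (auto simp: sw_def)
      show "{0..<n} \<subseteq> sw a b ` {0..<n}"
      proof
        fix x assume "x \<in> {0..<n}"
        hence "sw a b x \<in> {0..<n}" using a b by (auto simp: sw_def)
        thus "x \<in> sw a b ` {0..<n}" by (metis image_eqI sw_sw)
      qed
    qed
    finally show ?thesis .
  qed
  show ?thesis unfolding perfect_matchings_def using 1 2 3 by blast
qed

lemma pm_sym:
  assumes "i < n" "j < n" "j' < n" "i \<noteq> j" "i \<noteq> j'"
  shows "card {M\<in>perfect_matchings n. {i,j}\<in>M} = card {M\<in>perfect_matchings n. {i,j'}\<in>M}"
proof -
  have s1: "sw j j' i = i" "sw j j' j = j'" "sw j j' j' = j" using assms by (auto simp: sw_def)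
  have im: "sw j j' ` {i,j} = {i,j'}" using s1 by simp
  have im2: "sw j j' ` {i,j'} = {i,j}" using s1 by simp
  have "Phi j j' ` {M\<in>perfect_matchings n. {i,j}\<in>M} = {M\<in>perfect_matchings n. {i,j'}\<in>M}"
  proof
    show "Phi j j' ` {M\<in>perfect_matchings n. {i,j}\<in>M} \<subseteq> {M\<in>perfect_matchings n. {i,j'}\<in>M}"
    proof
      fix M' assume "M' \<in> Phi j j' ` {M\<in>perfect_matchings n. {i,j}\<in>M}"
      then obtain M where M: "M \<in> perfect_matchings n" "{i,j}\<in>M" "M' = Phi j j' M" by blast
      have "M' \<in> perfect_matchings n" unfolding M(3) by (rule Phi_pm[OF M(1) assms(2) assms(3)])
      moreover have "{i,j'} \<in> M'" unfolding M(3) Phi_def using imageI[OF M(2), of "\<lambda>e. sw j j' ` e"] im by simp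
      ultimately show "M' \<in> {M\<in>perfect_matchings n. {i,j'}\<in>M}" by blast
    qed
    show "{M\<in>perfect_matchings n. {i,j'}\<in>M} \<subseteq> Phi j j' ` {M\<in>perfect_matchings n. {i,j}\<in>M}"
    proof
      fix M assume M: "M \<in> {M\<in>perfect_matchings n. {i,j'}\<in>M}"
      have M1: "M \<in> perfect_matchings n" "{i,j'} \<in> M" using M by auto
      have "Phi j j' M \<in> perfect_matchings n" by (rule Phi_pm[OF M1(1) assms(2) assms(3)])
      moreover have "{i,j} \<in> Phi j j' M" unfolding Phi_def using imageI[OF M1(2), of "\<lambda>e. sw j j' ` e"] im2 by simp
      ultimately have "Phi j j' M \<in> {M\<in>perfect_matchings n. {i,j}\<in>M}" by blast
      hence "Phi j j' (Phi j j' M) \<in> Phi j j' ` {M\<in>perfect_matchings n. {i,j}\<in>M}" by (rule imageI)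
      thus "M \<in> Phi j j' ` {M\<in>perfect_matchings n. {i,j}\<in>M}" by simp
    qed
  qed
  moreover have "inj_on (Phi j j') X" for X
  proof (rule inj_onI)
    fix x y assume "Phi j j' x = Phi j j' y"
    hence "Phi j j' (Phi j j' x) = Phi j j' (Phi j j' y)" by simp
    thus "x = y" by simp
  qed
  ultimately show ?thesis using card_image[of "Phi j j'" "{M\<in>perfect_matchings n. {i,j}\<in>M}"] by simp
qed

lemma pm_count:
  assumes "i < n" "j < n" "i \<noteq> j"
  shows "real (card {M\<in>perfect_matchings n. {i,j}\<in>M}) * (real n - 1) = real (card (perfect_matchings n))"
proof -
  have "card (perfect_matchings n) = (\<Sum>j'\<in>{0..<n}-{i}. card {M\<in>perfect_matchings n. {i,j'}\<in>M})"
    using pm_sum_count[OF assms(1)] by simp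
  also have "\<dots> = (\<Sum>j'\<in>{0..<n}-{i}. card {M\<in>perfect_matchings n. {i,j}\<in>M})"
  proof (rule sum.cong[OF refl])
    fix j' assume "j' \<in> {0..<n}-{i}"
    hence "j' < n" "i \<noteq> j'" by auto
    thus "card {M\<in>perfect_matchings n. {i,j'}\<in>M} = card {M\<in>perfect_matchings n. {i,j}\<in>M}"
      using pm_sym[of i n j' j] assms by simp
  qed
  also have "\<dots> = (n - 1) * card {M\<in>perfect_matchings n. {i,j}\<in>M}"
    using assms by simp
  finally show ?thesis using assms by (simp add: of_nat_diff)
qed



lemma Qf_cong: "(\<And>i. i < N \<Longrightarrow> y i = y' i) \<Longrightarrow> Qf W N y = Qf W N y'"
  unfolding Qf_def Lf_def by (intro sum.cong refl) auto

lemma pair_sum: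
  fixes f :: "nat \<Rightarrow> nat \<Rightarrow> real"
  assumes pq: "p \<noteq> q" "p < n" "q < n"
  shows "(\<Sum>j<n. \<Sum>i<j. if {p,q} = {i,j} then f i j else 0) = f (min p q) (max p q)"
proof -
  have inner: "(\<Sum>i<j. if {p,q} = {i,j} then f i j else 0) = (if j = max p q then f (min p q) j else 0)" for j
  proof -
    have "(\<Sum>i<j. if {p,q} = {i,j} then f i j else 0) = (\<Sum>i<j. if j = max p q \<and> i = min p q then f i j else 0)"
    proof (intro sum.cong refl)
      fix i assume "i \<in> {..<j}"
      hence "i < j" by simp
      hence "({p,q} = {i,j}) = (j = max p q \<and> i = min p q)"
        using pq(1) by (auto simp: doubleton_eq_iff min_def max_def)
      thus "(if {p,q} = {i,j} then f i j else 0) = (if j = max p q \<and> i = min p q then f i j else 0)" by simp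
    qed
    also have "\<dots> = (if j = max p q then f (min p q) j else 0)"
    proof (cases "j = max p q")
      case True
      have "min p q < j" using True pq(1) by (auto simp: min_def max_def)
      thus ?thesis using True by (simp add: sum.delta)
    qed simp
    finally show ?thesis .
  qed
  have "max p q < n" using pq by (simp add: max_def)
  thus ?thesis unfolding inner by (simp add: sum.delta)
qed

lemma main_bound:
  fixes k :: nat and A :: "(nat \<Rightarrow> bool) \<Rightarrow> nat" and B :: "nat set set \<Rightarrow> (nat \<times> nat) \<times> nat"
  assumes n_def: "n = 2^k" and n2: "2 \<le> n" and valid: "hm_valid_strategy k A B"
  shows "hm_win_prob k A B \<le> 1/2 + 8 * sqrt (real n) * log 2 (real n) / (real n - 1)"
proof -
  define P where "P = perfect_matchings n"
  define X where "X = hm_inputs n"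
  define ii where "ii M = fst (fst (B M))" for M
  define jj where "jj M = snd (fst (B M))" for M
  define bb where "bb M = snd (B M)" for M
  define sg where "sg a M = (if bits_ip k (xor a (bb M)) (xor (ii M) (jj M)) then -1 else 1::real)" for a M
  define yv where "yv x i = (if x i then -1 else 1::real)" for x :: "nat \<Rightarrow> bool" and i
  have finP: "finite P" unfolding P_def by (rule pm_finite)
  have X_eq: "X = {0..<n} \<rightarrow>\<^sub>E (UNIV::bool set)" unfolding X_def hm_inputs_def by simp
  have finX: "finite X" unfolding X_eq by (rule finite_PiE) auto
  have cardX: "card X = 2^n" unfolding X_eq by (simp add: card_funcsetE)
  have Bv: "{ii M, jj M} \<in> M" if "M \<in> P" for M
    using valid that unfolding hm_valid_strategy_def P_def n_def ii_def jj_def by blast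
  have Av: "A x < n" if "x \<in> X" for x
    using valid that unfolding hm_valid_strategy_def X_def n_def by blast
  have ij_ne: "ii M \<noteq> jj M" if MP0: "M \<in> P" for M
  proof
    assume e: "ii M = jj M"
    have MP: "M \<in> perfect_matchings n" using MP0 P_def by simp
    obtain p q where "p \<noteq> q" "{ii M, jj M} = {p,q}" using pm_edge[OF MP Bv[OF MP0]] by blast
    thus False using e by (auto simp: doubleton_eq_iff)
  qed
  have ij_lt: "ii M < n \<and> jj M < n" if "M \<in> P" for M
    using pm_Union[of M n] Bv[OF that] that unfolding P_def by auto
  have ind: "(if hm_wins k x a (B M) then 1 else 0 :: real) = (1 + sg a M * yv x (ii M) * yv x (jj M))/2" for x a M
  proof -
    obtain i j b where Bm: "B M = ((i,j),b)" by (metis prod.collapse)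
    show ?thesis unfolding hm_wins_def sg_def yv_def ii_def jj_def bb_def Bm by auto
  qed
  have RHS0: "0 \<le> 8 * sqrt (real n) * log 2 (real n) / (real n - 1)"
    using n2 by (intro divide_nonneg_nonneg mult_nonneg_nonneg) auto
  show ?thesis
  proof (cases "card P = 0")
    case True
    thus ?thesis unfolding hm_win_prob_def using RHS0 n_def P_def by simp
  next
    case False
    hence Ppos: "real (card P) > 0" by simp
    define Z where "Z a x = (\<Sum>M\<in>P. sg a M * yv x (ii M) * yv x (jj M)) / real (card P)" for a x
    define m where "m = (\<Sum>x\<in>X. Z (A x) x) / real (card X)"
    have Xpos: "real (card X) > 0" using cardX by simp
    have win: "hm_win_prob k A B = 1/2 + m/2"
    proof -
      have "(\<Sum>M\<in>P. if hm_wins k x (A x) (B M) then 1 else 0 :: real) = real (card P)/2 + real (card P) * Z (A x) x / 2" for x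
      proof -
        have "(\<Sum>M\<in>P. if hm_wins k x (A x) (B M) then 1 else 0 :: real) = (\<Sum>M\<in>P. 1/2 + (sg (A x) M * yv x (ii M) * yv x (jj M))/2)"
          unfolding ind by (simp add: add_divide_distrib)
        also have "\<dots> = real (card P)/2 + (\<Sum>M\<in>P. sg (A x) M * yv x (ii M) * yv x (jj M))/2"
          by (simp add: sum.distrib sum_divide_distrib)
        also have "\<dots> = real (card P)/2 + real (card P) * Z (A x) x / 2"
          unfolding Z_def using Ppos by simp
        finally show ?thesis .
      qed
      hence "(\<Sum>x\<in>X. \<Sum>M\<in>P. if hm_wins k x (A x) (B M) then 1 else 0 :: real)
          = real (card X) * real (card P) / 2 + real (card P) * (\<Sum>x\<in>X. Z (A x) x) / 2"
        by (simp add: sum.distrib sum_divide_distrib sum_distrib_left)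
      moreover have "hm_win_prob k A B = (\<Sum>x\<in>X. \<Sum>M\<in>P. if hm_wins k x (A x) (B M) then 1 else 0 :: real) / (real (card X) * real (card P))"
        unfolding hm_win_prob_def X_def P_def n_def by simp
      ultimately have "hm_win_prob k A B = (real (card X) * real (card P) / 2 + real (card P) * (\<Sum>x\<in>X. Z (A x) x) / 2) / (real (card X) * real (card P))"
        by simp
      also have "\<dots> = 1/2 + m/2" unfolding m_def using Ppos Xpos by (simp add: field_simps)
      finally show ?thesis .
    qed
    define W where "W a j i = (\<Sum>M\<in>P. if {ii M, jj M} = {i,j} then sg a M else 0) / real (card P)" for a j i
    define D where "D j i = (\<Sum>M\<in>P. if {ii M, jj M} = {i,j} then 1 else 0) / real (card P)" for j i
    have ZQ: "Z a x = Qf (W a) n (yv x)" for a x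
    proof -
      have "Qf (W a) n (yv x) = (\<Sum>j<n. \<Sum>i<j. \<Sum>M\<in>P. (if {ii M, jj M} = {i,j} then sg a M * yv x i * yv x j else 0) / real (card P))"
        unfolding Qf_def Lf_def W_def
        by (auto simp: sum_distrib_left sum_distrib_right sum_divide_distrib mult_ac intro!: sum.cong)
      also have "\<dots> = (\<Sum>M\<in>P. \<Sum>j<n. \<Sum>i<j. (if {ii M, jj M} = {i,j} then sg a M * yv x i * yv x j else 0) / real (card P))"
        by (subst sum.swap) (simp add: sum.swap[of _ "{..<_}" P])
      also have "\<dots> = (\<Sum>M\<in>P. (sg a M * yv x (ii M) * yv x (jj M)) / real (card P))"
      proof (rule sum.cong[OF refl])
        fix M assume M: "M \<in> P"
        have "(\<Sum>j<n. \<Sum>i<j. (if {ii M, jj M} = {i,j} then sg a M * yv x i * yv x j else 0) / real (card P))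
            = (\<Sum>j<n. \<Sum>i<j. (if {ii M, jj M} = {i,j} then sg a M * yv x i * yv x j else 0)) / real (card P)"
          by (simp add: sum_divide_distrib)
        also have "\<dots> = (sg a M * yv x (min (ii M) (jj M)) * yv x (max (ii M) (jj M))) / real (card P)"
          using pair_sum[of "ii M" "jj M" n "\<lambda>i j. sg a M * yv x i * yv x j"] ij_ne[OF M] ij_lt[OF M] by simp
        also have "\<dots> = (sg a M * yv x (ii M) * yv x (jj M)) / real (card P)"
          by (cases "ii M \<le> jj M") (simp_all add: min_def max_def)
        finally show "(\<Sum>j<n. \<Sum>i<j. (if {ii M, jj M} = {i,j} then sg a M * yv x i * yv x j else 0) / real (card P))
            = (sg a M * yv x (ii M) * yv x (jj M)) / real (card P)" .
      qed
      also have "\<dots> = Z a x" unfolding Z_def by (simp add: sum_divide_distrib)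
      finally show ?thesis by simp
    qed
    have n1: "real n - 1 > 0" using n2 by simp
    have absW: "\<bar>W a j i\<bar> \<le> D j i" for a j i
    proof -
      have "\<bar>\<Sum>M\<in>P. if {ii M, jj M} = {i,j} then sg a M else 0\<bar> \<le> (\<Sum>M\<in>P. \<bar>if {ii M, jj M} = {i,j} then sg a M else 0\<bar>)"
        by (rule sum_abs)
      also have "\<dots> = (\<Sum>M\<in>P. if {ii M, jj M} = {i,j} then 1 else 0)"
        by (intro sum.cong refl) (simp add: sg_def)
      finally show ?thesis unfolding W_def D_def using Ppos by (simp add: divide_right_mono)
    qed
    have Dle: "D j i \<le> 1 / (real n - 1)" if ij: "i < j" "j < n" for i j
    proof -
      have "(\<Sum>M\<in>P. if {ii M, jj M} = {i,j} then 1 else 0) = real (card {M\<in>P. {ii M, jj M} = {i,j}})"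
      proof -
        have "real (\<Sum>M\<in>P. if {ii M, jj M} = {i,j} then 1 else 0) = (\<Sum>M\<in>P. if {ii M, jj M} = {i,j} then 1 else 0)"
          by (simp add: of_nat_sum if_distrib cong: if_cong)
        thus ?thesis using sum_if_card[OF finP, of "\<lambda>M. {ii M, jj M} = {i,j}"] by simp
      qed
      also have "\<dots> \<le> real (card {M\<in>P. {i,j} \<in> M})"
        by (intro of_nat_mono card_mono) (use finP Bv in \<open>auto, metis\<close>)
      also have "\<dots> = real (card P) / (real n - 1)"
        using pm_count[of i n j] ij n1 unfolding P_def by (simp add: field_simps)
      finally show ?thesis unfolding D_def using Ppos n2 by (simp add: divide_simps)
    qed
    have Dsum: "(\<Sum>j<n. \<Sum>i<j. D j i) = 1"
    proof -
      have "(\<Sum>j<n. \<Sum>i<j. D j i) = (\<Sum>M\<in>P. \<Sum>j<n. \<Sum>i<j. (if {ii M, jj M} = {i,j} then 1 else 0)) / real (card P)"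
        unfolding D_def by (simp add: sum_divide_distrib sum.swap[of _ P])
      also have "\<dots> = (\<Sum>M\<in>P. 1) / real (card P)"
      proof -
        have "(\<Sum>j<n. \<Sum>i<j. (if {ii M, jj M} = {i,j} then 1 else 0)) = (1::real)" if M: "M \<in> P" for M
          using pair_sum[of "ii M" "jj M" n "\<lambda>i j. 1"] ij_ne[OF M] ij_lt[OF M] by simp
        thus ?thesis by simp
      qed
      also have "\<dots> = 1" using Ppos by simp
      finally show ?thesis .
    qed
    have FrW: "Fr (W a) n \<le> 1 / (real n - 1)" for a
    proof -
      have "Fr (W a) n \<le> (\<Sum>j<n. \<Sum>i<j. D j i * (1 / (real n - 1)))"
        unfolding Fr_def
      proof (intro sum_mono)
        fix j i assume j: "j \<in> {..<n}" and i: "i \<in> {..<j}"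
        have "\<bar>W a j i\<bar> \<le> 1 / (real n - 1)" using absW[of a j i] Dle[of i j] i j by simp
        hence "\<bar>W a j i\<bar> * \<bar>W a j i\<bar> \<le> D j i * (1 / (real n - 1))"
          using absW[of a j i] by (intro mult_mono) auto
        thus "(W a j i)^2 \<le> D j i * (1 / (real n - 1))" by (simp add: power2_eq_square abs_mult_self)
      qed
      also have "\<dots> = 1 / (real n - 1)" by (simp add: sum_divide_distrib[symmetric] Dsum)
      finally show ?thesis .
    qed
    define lam where "lam = sqrt (real n - 1) / 4"
    have lam0: "lam > 0" unfolding lam_def using n1 by simp
    have lam2: "lam^2 = (real n - 1) / 16" unfolding lam_def using n1 by (simp add: power_divide)
    have E: "(\<Sum>x\<in>X. exp (lam * Z a x)) / real (card X) \<le> exp (1/8)" for a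
    proof -
      have dep: "exp (lam * Qf (W a) n (yv x)) = exp (lam * Qf (W a) n (yv x'))" if "\<forall>i<n. x i = x' i" for x x'
        using that by (intro arg_cong[where f=exp] arg_cong[where f="\<lambda>u. lam * u"] Qf_cong) (simp add: yv_def)
      have "(\<Sum>x\<in>X. exp (lam * Z a x)) = (\<Sum>x\<in>{0..<n} \<rightarrow>\<^sub>E (UNIV::bool set). exp (lam * Qf (W a) n (yv x)))"
        unfolding X_eq ZQ ..
      also have "\<dots> = 2^n * Ex n (\<lambda>y. exp (lam * Qf (W a) n (yv (\<lambda>i. y i = -1))))"
        by (rule sum_PiE_Ex) (rule dep)
      also have "Ex n (\<lambda>y. exp (lam * Qf (W a) n (yv (\<lambda>i. y i = -1)))) = Ex n (\<lambda>y. exp (lam * Qf (W a) n y))"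
      proof (rule Ex_cong)
        fix y :: "nat \<Rightarrow> real" assume c: "\<forall>i<n. y i = 1 \<or> y i = -1"
        have "Qf (W a) n (yv (\<lambda>i. y i = -1)) = Qf (W a) n y"
          by (rule Qf_cong) (use c in \<open>auto simp: yv_def\<close>)
        thus "exp (lam * Qf (W a) n (yv (\<lambda>i. y i = -1))) = exp (lam * Qf (W a) n y)" by simp
      qed
      also have "Ex n (\<lambda>y. exp (lam * Qf (W a) n y)) \<le> exp (2*lam^2*Fr (W a) n)"
      proof (rule mgf)
        have "lam^2 * Fr (W a) n \<le> lam^2 * (1 / (real n - 1))"
          by (intro mult_left_mono FrW) simp
        also have "\<dots> = 1/16" unfolding lam2 using n1 by simp
        finally show "lam^2 * Fr (W a) n \<le> 1/16" .
      qed
      also have "exp (2*lam^2*Fr (W a) n) \<le> exp (1/8)"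
      proof -
        have "lam^2 * Fr (W a) n \<le> lam^2 * (1 / (real n - 1))"
          by (intro mult_left_mono FrW) simp
        also have "\<dots> = 1/16" unfolding lam2 using n1 by simp
        finally show ?thesis by simp
      qed
      finally have "(\<Sum>x\<in>X. exp (lam * Z a x)) \<le> 2^n * exp (1/8)" by simp
      thus ?thesis using cardX by (simp add: divide_simps mult.commute)
    qed
    have J: "exp (lam * m) * real (card X) \<le> (\<Sum>x\<in>X. exp (lam * Z (A x) x))"
    proof -
      have "(\<Sum>x\<in>X. exp (lam * m) * (1 + lam * (Z (A x) x - m))) \<le> (\<Sum>x\<in>X. exp (lam * Z (A x) x))"
      proof (rule sum_mono)
        fix x
        have "exp (lam * m) * (1 + lam * (Z (A x) x - m)) \<le> exp (lam * m) * exp (lam * (Z (A x) x - m))"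
          by (intro mult_left_mono exp_ge_add_one_self) simp
        also have "\<dots> = exp (lam * Z (A x) x)" by (simp add: algebra_simps flip: exp_add)
        finally show "exp (lam * m) * (1 + lam * (Z (A x) x - m)) \<le> exp (lam * Z (A x) x)" .
      qed
      moreover have "(\<Sum>x\<in>X. exp (lam * m) * (1 + lam * (Z (A x) x - m))) = exp (lam * m) * real (card X)"
      proof -
        have "(\<Sum>x\<in>X. exp (lam * m) * (1 + lam * (Z (A x) x - m)))
            = exp (lam * m) * (real (card X) + lam * ((\<Sum>x\<in>X. Z (A x) x) - real (card X) * m))"
          by (simp add: sum_distrib_left sum.distrib sum_subtractf algebra_simps)
        also have "(\<Sum>x\<in>X. Z (A x) x) = real (card X) * m" unfolding m_def using Xpos by simp
        finally show ?thesis by simp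
      qed
      ultimately show ?thesis by simp
    qed
    have S: "(\<Sum>x\<in>X. exp (lam * Z (A x) x)) \<le> (\<Sum>x\<in>X. \<Sum>a<n. exp (lam * Z a x))"
    proof (rule sum_mono)
      fix x assume "x \<in> X"
      hence "A x \<in> {..<n}" using Av by simp
      thus "exp (lam * Z (A x) x) \<le> (\<Sum>a<n. exp (lam * Z a x))"
        by (rule member_le_sum[where f = "\<lambda>a. exp (lam * Z a x)"]) auto
    qed
    have T: "(\<Sum>x\<in>X. \<Sum>a<n. exp (lam * Z a x)) \<le> real n * exp (1/8) * real (card X)"
    proof -
      have "(\<Sum>x\<in>X. \<Sum>a<n. exp (lam * Z a x)) = (\<Sum>a<n. \<Sum>x\<in>X. exp (lam * Z a x))"
        by (rule sum.swap)
      also have "\<dots> \<le> (\<Sum>a<n. exp (1/8) * real (card X))"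
      proof (rule sum_mono)
        fix a show "(\<Sum>x\<in>X. exp (lam * Z a x)) \<le> exp (1/8) * real (card X)"
          using E[of a] Xpos by (simp add: pos_divide_le_eq)
      qed
      finally show ?thesis by simp
    qed
    have "exp (lam * m) \<le> real n * exp (1/8)"
      using J S T Xpos by (smt (verit) mult_right_mono mult_le_cancel_right_pos)
    hence "lam * m \<le> ln (real n * exp (1/8))"
      using n2 by (subst ln_exp[symmetric]) (intro ln_mono; simp)
    also have "\<dots> = real k * ln 2 + 1/8"
      using n2 unfolding n_def by (simp add: ln_mult ln_realpow)
    finally have lm: "lam * m \<le> real k * ln 2 + 1/8" .
    have k1: "real k \<ge> 1" using n2 unfolding n_def by (cases k) auto
    have logn: "log 2 (real n) = real k" unfolding n_def by simp
    define s where "s = sqrt (real n - 1)"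
    have s0: "s > 0" unfolding s_def using n1 by simp
    have ss: "s * s = real n - 1" unfolding s_def using n1 by simp
    have sn: "s \<le> sqrt (real n)" unfolding s_def by simp
    have ln2: "ln 2 < (1::real)" by (rule ln_2_less_1)
    have m_le: "m \<le> 4 * (real k * ln 2 + 1/8) / s"
      using lm s0 unfolding lam_def s_def[symmetric] by (simp add: field_simps)
    have "m/2 \<le> 2 * (real k * ln 2 + 1/8) / s" using m_le by simp
    also have "\<dots> = 2 * (real k * ln 2 + 1/8) * s / (s * s)"
      using s0 by (simp add: field_simps)
    also have "\<dots> = 2 * (real k * ln 2 + 1/8) * s / (real n - 1)"
      by (simp only: ss)
    also have "\<dots> \<le> 8 * sqrt (real n) * real k / (real n - 1)"
    proof (rule divide_right_mono)
      have "real k * ln 2 \<le> real k * 1" using ln2 k1 by (intro mult_left_mono) auto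
      hence "real k * ln 2 + 1/8 \<le> 2 * real k" using k1 by linarith
      hence "2 * (real k * ln 2 + 1/8) * s \<le> 2 * (2 * real k) * sqrt (real n)"
        using sn s0 k1 by (intro mult_mono) auto
      moreover have "2 * (2 * real k) * sqrt (real n) \<le> 8 * sqrt (real n) * real k" using k1 by simp
      ultimately show "2 * (real k * ln 2 + 1/8) * s \<le> 8 * sqrt (real n) * real k" by linarith
    qed (use n1 in simp)
    finally show ?thesis unfolding win logn by simp
  qed
qed

theorem mainTheorem2:
  fixes n k :: nat
  assumes "n = 2 ^ k" and "2 \<le> n"
  shows "hm_classical_value k \<le> 1/2 + 8 * sqrt (real n) * log 2 (real n) / (real n - 1)"
proof -
  define A0 where "A0 = (\<lambda>x::nat\<Rightarrow>bool. 0::nat)"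
  define B0 where "B0 = (\<lambda>M::nat set set. ((SOME p. {fst p, snd p} \<in> M), 0::nat))"
  have "hm_valid_strategy k A0 B0"
    unfolding hm_valid_strategy_def
  proof (rule conjI; intro ballI)
    fix x assume "x \<in> hm_inputs (2^k)" show "A0 x < 2^k" unfolding A0_def by simp
  next
    fix M assume M: "M \<in> perfect_matchings (2^k)"
    have "0 \<in> \<Union>M" using pm_Union[OF M] by simp
    then obtain e where e: "e \<in> M" by auto
    obtain p q where "p \<noteq> q" "e = {p,q}" using pm_edge[OF M e] by auto
    hence "\<exists>pp. {fst pp, snd pp} \<in> M" using e by (intro exI[of _ "(p,q)"]) simp
    hence "{fst (SOME pp. {fst pp, snd pp} \<in> M), snd (SOME pp. {fst pp, snd pp} \<in> M)} \<in> M"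
      by (rule someI_ex)
    thus "{fst (fst (B0 M)), snd (fst (B0 M))} \<in> M \<and> snd (B0 M) < 2^k" unfolding B0_def by simp
  qed
  hence ne: "{hm_win_prob k A B | A B. hm_valid_strategy k A B} \<noteq> {}" by blast
  show ?thesis unfolding hm_classical_value_def
    by (rule cSup_least[OF ne]) (use main_bound assms in blast)
qed

end
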